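(* Under Assumption 1, if for every $k\in N$ the polyhedral set $S_k$ is empty, then the convex relaxation (R) and the Shor relaxation (S) are exact, i.e. $p^\star=v^\star=c^\star$.
   Context: Let $N=\{1,\dots,n\}$ and $M=\{1,\dots,m\}$. Let ${\bf D}$ and ${\bf A}^i$ ($i\in M$) be real diagonal $n\times n$ matrices, ${\bf c},{\bf a}_i\in\mathbb{R}^n$ ($a_{ij}$ denotes the $j$-th entry of ${\bf a}_i$) and $b_i\in\mathbb{R}$. The diagonal QCQP is (P): $c^\star=\inf\{{\bf x}^\top{\bf D}{\bf x}+2{\bf c}^\top{\bf x} : {\bf x}^\top{\bf A}^i{\bf x}+2{\bf a}_i^\top{\bf x}\le b_i,\ i\in M\}$. Its Shor relaxation is (S): $v^\star=\inf\{{\bf D}\bullet{\bf X}+2{\bf c}^\top{\bf x} : {\bf A}^i\bullet{\bf X}+2{\bf a}_i^\top{\bf x}\le b_i\ (i\in M),\ {\bf X}-{\bf x}{\bf x}^\top\succeq {\bf O}\}$, where ${\bf P}\bullet{\bf Q}=\mathrm{trace}({\bf P}{\bf Q})$. The convex relaxation is (R): $p^\star=\inf\{\sum_{j\in N}D_{jj}z_j+2\sum_{j\in N}c_jx_j : \sum_{j\in N}A^i_{jj}z_j+2\sum_{j\in N}a_{ij}x_j\le b_i\ (i\in M),\ x_j^2\le z_j\ (j\in N)\}$. Assumption 1: (i) the feasible region of (P) is nonempty; (ii) there exists $\bar{\bf y}\in\mathbb{R}^m$, $\bar{\bf y}\ge 0$, with $\sum_{i\in M}\bar y_i{\bf A}^i\succ{\bf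 O}$; (iii) the feasible region of (S) has nonempty interior. For $k\in N$, $S_k$ is the set of $\boldsymbol{\mu}\in\mathbb{R}^m$ satisfying: $D_{kk}+\sum_{i\in M}\mu_iA^i_{kk}=0$; $c_k+\sum_{i\in M}\mu_ia_{ik}=0$; $D_{jj}+\sum_{i\in M}\mu_iA^i_{jj}\ge 0$ for all $j\in N$, $j\ne k$; $\mu_i\ge 0$ for all $i\in M$. *)

theory Defs
  imports "HOL-Analysis.Analysis"
begin

text \<open>Diagonal QCQP. Index sets N and M are the finite types 'n and 'm.
  Matrices are real^'n^'n; A i is the matrix A^i; a i is the vector a_i.\<close>

definition diag_mat :: "real^'n^'n \<Rightarrow> bool" where
  "diag_mat P \<longleftrightarrow> (\<forall>i j. i \<noteq> j \<longrightarrow> P $ i $ j = 0)"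

definition mat_bullet :: "real^'n^'n \<Rightarrow> real^'n^'n \<Rightarrow> real" where
  "mat_bullet P Q = trace (P ** Q)"

definition outer :: "real^'n \<Rightarrow> real^'n^'n" where
  "outer x = (\<chi> i j. x $ i * x $ j)"

definition symmetric_mat :: "real^'n^'n \<Rightarrow> bool" where
  "symmetric_mat P \<longleftrightarrow> transpose P = P"

definition psd :: "real^'n^'n \<Rightarrow> bool" where
  "psd P \<longleftrightarrow> symmetric_mat P \<and> (\<forall>v. v \<bullet> (P *v v) \<ge> 0)"

definition pd :: "real^'n^'n \<Rightarrow> bool" where
  "pd P \<longleftrightarrow> symmetric_mat P \<and> (\<forall>v. v \<noteq> 0 \<longrightarrow> v \<bullet> (P *v v) > 0)"

definition feasP :: "('m \<Rightarrow> real^'n^'n) \<Rightarrow> ('m \<Rightarrow> real^'n) \<Rightarrow> ('m \<Rightarrow> real) \<Rightarrow> (real^'n) set" where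
  "feasP A a b = {x. \<forall>i. x \<bullet> (A i *v x) + 2 * (a i \<bullet> x) \<le> b i}"

definition c_star :: "real^'n^'n \<Rightarrow> real^'n \<Rightarrow> ('m \<Rightarrow> real^'n^'n) \<Rightarrow> ('m \<Rightarrow> real^'n) \<Rightarrow> ('m \<Rightarrow> real) \<Rightarrow> ereal" where
  "c_star D c A a b = (INF x\<in>feasP A a b. ereal (x \<bullet> (D *v x) + 2 * (c \<bullet> x)))"

definition feasS :: "('m \<Rightarrow> real^'n^'n) \<Rightarrow> ('m \<Rightarrow> real^'n) \<Rightarrow> ('m \<Rightarrow> real) \<Rightarrow> ((real^'n) \<times> (real^'n^'n)) set" where
  "feasS A a b = {(x, X). symmetric_mat X \<and>
      (\<forall>i. mat_bullet (A i) X + 2 * (a i \<bullet> x) \<le> b i) \<and> psd (X - outer x)}"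

definition v_star :: "real^'n^'n \<Rightarrow> real^'n \<Rightarrow> ('m \<Rightarrow> real^'n^'n) \<Rightarrow> ('m \<Rightarrow> real^'n) \<Rightarrow> ('m \<Rightarrow> real) \<Rightarrow> ereal" where
  "v_star D c A a b = (INF p\<in>feasS A a b. ereal (mat_bullet D (snd p) + 2 * (c \<bullet> fst p)))"

text \<open>Nonempty interior of the feasible region of (S), taken in the space
  R^n \<times> S^n (symmetric matrices).\<close>
definition feasS_has_interior :: "('m \<Rightarrow> real^'n^'n) \<Rightarrow> ('m \<Rightarrow> real^'n) \<Rightarrow> ('m \<Rightarrow> real) \<Rightarrow> bool" where
  "feasS_has_interior A a b \<longleftrightarrow> (\<exists>x0 X0 e. e > 0 \<and> symmetric_mat X0 \<and>
      (\<forall>x X. symmetric_mat X \<and> dist x x0 < e \<and> dist X X0 < e \<longrightarrow> (x, X) \<in> feasS A a b))"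

definition feasR :: "('m \<Rightarrow> real^'n^'n) \<Rightarrow> ('m \<Rightarrow> real^'n) \<Rightarrow> ('m \<Rightarrow> real) \<Rightarrow> ((real^'n) \<times> (real^'n)) set" where
  "feasR A a b = {(x, z). (\<forall>i. (\<Sum>j\<in>UNIV. A i $ j $ j * z $ j) + 2 * (\<Sum>j\<in>UNIV. a i $ j * x $ j) \<le> b i)
      \<and> (\<forall>j. (x $ j)\<^sup>2 \<le> z $ j)}"

definition p_star :: "real^'n^'n \<Rightarrow> real^'n \<Rightarrow> ('m \<Rightarrow> real^'n^'n) \<Rightarrow> ('m \<Rightarrow> real^'n) \<Rightarrow> ('m \<Rightarrow> real) \<Rightarrow> ereal" where
  "p_star D c A a b = (INF p\<in>feasR A a b.
      ereal ((\<Sum>j\<in>UNIV. D $ j $ j * snd p $ j) + 2 * (\<Sum>j\<in>UNIV. c $ j * fst p $ j)))"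

definition S_set :: "real^'n^'n \<Rightarrow> real^'n \<Rightarrow> ('m \<Rightarrow> real^'n^'n) \<Rightarrow> ('m \<Rightarrow> real^'n) \<Rightarrow> 'n \<Rightarrow> ('m \<Rightarrow> real) set" where
  "S_set D c A a k = {\<mu>.
      D $ k $ k + (\<Sum>i\<in>UNIV. \<mu> i * A i $ k $ k) = 0 \<and>
      c $ k + (\<Sum>i\<in>UNIV. \<mu> i * a i $ k) = 0 \<and>
      (\<forall>j. j \<noteq> k \<longrightarrow> D $ j $ j + (\<Sum>i\<in>UNIV. \<mu> i * A i $ j $ j) \<ge> 0) \<and>
      (\<forall>i. \<mu> i \<ge> 0)}"

end

theory Submission
  imports Defs
begin

lemma inner_sum_cart: "(x::real^'n) \<bullet> y = (\<Sum>j\<in>UNIV. x$j * y$j)"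
  by (simp add: inner_vec_def)

lemma diag_quad: "diag_mat (P::real^'n^'n) \<Longrightarrow> x \<bullet> (P *v x) = (\<Sum>j\<in>UNIV. P$j$j * (x$j)^2)"
proof -
  assume d: "diag_mat P"
  have "(P *v x) $ j = P$j$j * x$j" for j
  proof -
    have "(P *v x) $ j = (\<Sum>k\<in>UNIV. P$j$k * x$k)" by (simp add: matrix_vector_mult_def)
    also have "\<dots> = (\<Sum>k\<in>UNIV. if k = j then P$j$j * x$j else 0)"
      by (rule sum.cong) (use d in \<open>auto simp: diag_mat_def\<close>)
    also have "\<dots> = P$j$j * x$j" by simp
    finally show ?thesis .
  qed
  then show ?thesis by (simp add: inner_sum_cart power2_eq_square mult_ac)
qed

lemma diag_bullet: "diag_mat (P::real^'n^'n) \<Longrightarrow> mat_bullet P X = (\<Sum>j\<in>UNIV. P$j$j * X$j$j)"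
proof -
  assume d: "diag_mat P"
  have "(P ** X) $ j $ j = P$j$j * X$j$j" for j
  proof -
    have "(P ** X) $ j $ j = (\<Sum>k\<in>UNIV. P$j$k * X$k$j)" by (simp add: matrix_matrix_mult_def)
    also have "\<dots> = (\<Sum>k\<in>UNIV. if k = j then P$j$j * X$j$j else 0)"
      by (rule sum.cong) (use d in \<open>auto simp: diag_mat_def\<close>)
    also have "\<dots> = P$j$j * X$j$j" by simp
    finally show ?thesis .
  qed
  then show ?thesis by (simp add: mat_bullet_def trace_def)
qed

lemma quad_axis: "axis j (1::real) \<bullet> ((M::real^'n^'n) *v axis j 1) = M$j$j"
  by (simp add: inner_axis' matrix_vector_mul_component inner_axis)

lemma psd_diag: "psd (M::real^'n^'n) \<Longrightarrow> M$j$j \<ge> 0"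
  unfolding psd_def by (metis quad_axis)

lemma pd_diag: "pd (M::real^'n^'n) \<Longrightarrow> M$j$j > 0"
proof -
  assume "pd M"
  moreover have "axis j (1::real) \<noteq> 0" by (metis axis_nth zero_index zero_neq_one)
  ultimately show ?thesis unfolding pd_def by (metis quad_axis)
qed

lemma outer_comp: "outer x $ i $ j = x$i * x$j"
  by (simp add: outer_def)

lemma psd_outer_diag: "psd (X - outer x) \<Longrightarrow> X$j$j \<ge> (x$j)^2"
  using psd_diag[of "X - outer x" j] by (simp add: outer_comp power2_eq_square)

lemma feasP_to_S:
  assumes dA: "\<And>i. diag_mat (A i)" and x: "x \<in> feasP A a b"
  shows "(x, outer x) \<in> feasS A a b"
proof -
  have sym: "symmetric_mat (outer x)"
    by (simp add: symmetric_mat_def outer_def transpose_def vec_eq_iff mult.commute)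
  have "mat_bullet (A i) (outer x) = x \<bullet> (A i *v x)" for i
    using dA[of i] by (simp add: diag_bullet diag_quad outer_comp power2_eq_square)
  moreover have "psd (outer x - outer x)"
    by (simp add: psd_def symmetric_mat_def transpose_def vec_eq_iff)
  ultimately show ?thesis using x sym by (simp add: feasS_def feasP_def)
qed

definition gR :: "('m \<Rightarrow> real^'n^'n) \<Rightarrow> ('m \<Rightarrow> real^'n) \<Rightarrow> 'm \<Rightarrow> real^'n \<Rightarrow> real^'n \<Rightarrow> real" where
  "gR A a i x z = (\<Sum>j\<in>UNIV. A i $ j $ j * z $ j) + 2 * (\<Sum>j\<in>UNIV. a i $ j * x $ j)"

definition fR :: "real^'n^'n \<Rightarrow> real^'n \<Rightarrow> real^'n \<Rightarrow> real^'n \<Rightarrow> real" where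
  "fR D c x z = (\<Sum>j\<in>UNIV. D $ j $ j * z $ j) + 2 * (\<Sum>j\<in>UNIV. c $ j * x $ j)"

lemma feasR_alt: "feasR A a b = {(x,z). (\<forall>i. gR A a i x z \<le> b i) \<and> (\<forall>j. (x$j)^2 \<le> z$j)}"
  by (simp add: feasR_def gR_def)

lemma p_star_alt: "p_star D c A a b = (INF p\<in>feasR A a b. ereal (fR D c (fst p) (snd p)))"
  by (simp add: p_star_def fR_def)

lemma S_to_R:
  assumes dA: "\<And>i. diag_mat (A i)" and dD: "diag_mat D" and xX: "(x, X) \<in> feasS A a b"
  shows "(x, \<chi> j. X$j$j) \<in> feasR A a b \<and> fR D c x (\<chi> j. X$j$j) = mat_bullet D X + 2 * (c \<bullet> x)"
proof -
  have g: "gR A a i x (\<chi> j. X$j$j) = mat_bullet (A i) X + 2 * (a i \<bullet> x)" for i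
    using dA[of i] by (simp add: gR_def diag_bullet inner_sum_cart)
  from xX have "psd (X - outer x)" "\<forall>i. mat_bullet (A i) X + 2 * (a i \<bullet> x) \<le> b i"
    by (auto simp: feasS_def)
  then show ?thesis using g dD
    by (auto simp: feasR_alt fR_def diag_bullet inner_sum_cart psd_outer_diag)
qed

lemma norm_axis_gen: "norm (axis i (x::'a::real_normed_vector)) = norm x"
proof -
  have eq: "(\<lambda>j. (norm (axis i x $ j))^2) = (\<lambda>j. if j = i then (norm x)^2 else 0)"
    by (auto simp: axis_def)
  have "norm (axis i x) = sqrt (\<Sum>j\<in>UNIV. (norm (axis i x $ j))^2)" by (simp add: norm_vec_def L2_set_def)
  also have "\<dots> = sqrt (\<Sum>j\<in>UNIV. if j = i then (norm x)^2 else 0)" by (simp only: eq)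
  also have "\<dots> = norm x" by simp
  finally show ?thesis .
qed

lemma dist_E: "dist X (X + t *\<^sub>R axis k (axis k (1::real))) = \<bar>t\<bar>"
  by (simp add: dist_norm norm_axis_gen)

lemma sym_E: "symmetric_mat X \<Longrightarrow> symmetric_mat (X + t *\<^sub>R axis k (axis k (1::real)))"
  by (auto simp: symmetric_mat_def transpose_def vec_eq_iff axis_def)

lemma diag_E: "(X + t *\<^sub>R axis k (axis k (1::real))) $ j $ j = X$j$j + (if j = k then t else 0)"
  by (simp add: axis_def)

lemma sign_choice: "(c::real) \<noteq> 0 \<Longrightarrow> e > 0 \<Longrightarrow> \<exists>t. \<bar>t\<bar> = e \<and> t * c > 0"
proof (cases "c > 0")
  case True
  assume "e > 0" then show ?thesis using True by (intro exI[of _ e]) simp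
next
  case False
  assume "c \<noteq> 0" "e > 0" then show ?thesis using False by (intro exI[of _ "-e"]) (auto intro: mult_pos_neg)
qed

lemma slater:
  assumes dA: "\<And>i. diag_mat (A i)" and int: "feasS_has_interior A a b"
  shows "\<exists>x0 z0. (x0, z0) \<in> feasR A a b \<and> (\<forall>j. (x0$j)^2 < z0$j) \<and>
     (\<forall>i. gR A a i x0 z0 = b i \<longrightarrow> (\<forall>j. A i $ j $ j = 0 \<and> a i $ j = 0))"
proof -
  obtain x0 X0 e where e: "e > 0" "symmetric_mat X0"
    and ball: "\<And>x X. symmetric_mat X \<Longrightarrow> dist x x0 < e \<Longrightarrow> dist X X0 < e \<Longrightarrow> (x, X) \<in> feasS A a b"
    using int unfolding feasS_has_interior_def by blast
  define z0 where "z0 = (\<chi> j. X0$j$j)"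
  have in0: "(x0, X0) \<in> feasS A a b" using ball e by simp
  have g: "gR A a i x z0 = mat_bullet (A i) X0 + 2 * (a i \<bullet> x)" for i x
    using dA[of i] by (simp add: gR_def diag_bullet inner_sum_cart z0_def)
  have R: "(x0, z0) \<in> feasR A a b"
    using S_to_R[OF dA _ in0, where D=0 and c=0] unfolding z0_def by (auto simp: diag_mat_def)
  have strict: "(x0$j)^2 < z0$j" for j
  proof -
    let ?X = "X0 + (-(e/2)) *\<^sub>R axis j (axis j (1::real))"
    have "(x0, ?X) \<in> feasS A a b"
      apply (rule ball)
      using e sym_E[OF e(2), of "-(e/2)" j] dist_E[of X0 "-(e/2)" j] by (auto simp: dist_commute)
    then have "psd (?X - outer x0)" by (simp add: feasS_def)
    from psd_outer_diag[OF this, of j] e show ?thesis by (simp add: diag_E z0_def)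
  qed
  have triv: "A i $ k $ k = 0 \<and> a i $ k = 0" if eq: "gR A a i x0 z0 = b i" for i k
  proof (rule ccontr)
    assume "\<not> (A i $ k $ k = 0 \<and> a i $ k = 0)"
    then consider "A i $ k $ k \<noteq> 0" | "a i $ k \<noteq> 0" by blast
    then show False
    proof cases
      case 1
      obtain t where t: "\<bar>t\<bar> = e/2" "t * A i $ k $ k > 0" using sign_choice[OF 1, of "e/2"] e by auto
      let ?X = "X0 + t *\<^sub>R axis k (axis k (1::real))"
      have "(x0, ?X) \<in> feasS A a b"
        apply (rule ball)
        using e sym_E[OF e(2)] dist_E[of X0 t k] t by (auto simp: dist_commute)
      then have le: "mat_bullet (A i) ?X + 2 * (a i \<bullet> x0) \<le> b i" by (simp add: feasS_def)
      have "(\<Sum>j\<in>UNIV. A i$j$j * ?X$j$j) = (\<Sum>j\<in>UNIV. A i$j$j * X0$j$j + (if j = k then A i$k$k * t else 0))"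
        by (rule sum.cong) (auto simp: axis_def distrib_left)
      then have "mat_bullet (A i) ?X = mat_bullet (A i) X0 + A i $ k $ k * t"
        using dA[of i] by (simp add: diag_bullet sum.distrib)
      with le eq g[of i x0] t show False by (simp add: mult.commute)
    next
      case 2
      obtain t where t: "\<bar>t\<bar> = e/2" "t * a i $ k > 0" using sign_choice[OF 2, of "e/2"] e by auto
      let ?x = "x0 + t *\<^sub>R axis k (1::real)"
      have "(?x, X0) \<in> feasS A a b"
        apply (rule ball)
        using e t by (auto simp: dist_norm e(2))
      then have le: "mat_bullet (A i) X0 + 2 * (a i \<bullet> ?x) \<le> b i" by (simp add: feasS_def)
      have "a i \<bullet> ?x = a i \<bullet> x0 + t * a i $ k"
        by (simp add: inner_add_right inner_axis)
      with le eq g[of i x0] t show False by simp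
    qed
  qed
  show ?thesis using R strict triv by blast
qed

lemma quad_lb: fixes Q z r x :: real assumes "Q > 0" "x^2 \<le> z"
  shows "Q * z + 2 * r * x \<ge> Q/2 * z - 2 * r^2 / Q"
proof -
  have "Q * (Q * z + 2 * r * x) - Q * (Q/2 * z - 2 * r^2 / Q) = Q^2/2 * z + 2*Q*r*x + 2*r^2"
    using assms by (simp add: field_simps power2_eq_square)
  also have "\<dots> \<ge> Q^2/2 * x^2 + 2*Q*r*x + 2*r^2"
    using assms by (simp add: mult_left_mono)
  also have "Q^2/2 * x^2 + 2*Q*r*x + 2*r^2 = (Q*x + 2*r)^2 / 2" by (simp add: power2_eq_square field_simps)
  finally have "Q * (Q * z + 2 * r * x) - Q * (Q/2 * z - 2 * r^2 / Q) \<ge> (Q*x + 2*r)^2 / 2" .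
  moreover have "(Q*x + 2*r)^2 / 2 \<ge> 0" by simp
  ultimately have "Q * (Q/2 * z - 2 * r^2 / Q) \<le> Q * (Q * z + 2 * r * x)" by linarith
  then show ?thesis using assms(1) by (simp add: mult_le_cancel_left_pos)
qed

lemma abs_le_sq: "\<bar>x::real\<bar> \<le> 1 + x^2"
proof -
  have "0 \<le> (\<bar>x\<bar> - 1)^2" by simp
  then have "2 * \<bar>x\<bar> \<le> 1 + \<bar>x\<bar>^2" by (simp add: power2_eq_square algebra_simps)
  then show ?thesis by simp
qed

lemma feasR_bounded:
  fixes A :: "'m::finite \<Rightarrow> real^'n^'n"
  assumes dA: "\<And>i. diag_mat (A i)"
    and ii: "\<exists>y::'m \<Rightarrow> real. (\<forall>i. y i \<ge> 0) \<and> pd (\<Sum>i\<in>UNIV. y i *\<^sub>R A i)"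
  shows "bounded (feasR A a b)"
proof -
  obtain y where y0: "\<And>i. y i \<ge> 0" and pd: "pd (\<Sum>i\<in>UNIV. y i *\<^sub>R A i)" using ii by blast
  define Q where "Q j = (\<Sum>i\<in>UNIV. y i * A i $ j $ j)" for j
  define r where "r j = (\<Sum>i\<in>UNIV. y i * a i $ j)" for j
  define B where "B = (\<Sum>i\<in>UNIV. y i * b i)"
  define C where "C = B + (\<Sum>j\<in>UNIV. 2 * (r j)^2 / Q j)"
  define Rk where "Rk j = 1 + 2 * \<bar>C\<bar> / Q j" for j
  have Qpos: "Q j > 0" for j
    using pd_diag[OF pd, of j] by (simp add: Q_def)
  have bnd: "\<bar>x$k\<bar> \<le> Rk k \<and> \<bar>z$k\<bar> \<le> Rk k" if xz: "(x, z) \<in> feasR A a b" for x z k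
  proof -
    from xz have g: "\<And>i. gR A a i x z \<le> b i" and h: "\<And>j. (x$j)^2 \<le> z$j" by (auto simp: feasR_alt)
    have "(\<Sum>i\<in>UNIV. y i * gR A a i x z) \<le> B"
      unfolding B_def by (rule sum_mono) (simp add: g y0 mult_left_mono)
    moreover have "(\<Sum>i\<in>UNIV. y i * gR A a i x z) = (\<Sum>j\<in>UNIV. Q j * z$j + 2 * r j * x$j)"
    proof -
      have "(\<Sum>i\<in>UNIV. y i * gR A a i x z) = (\<Sum>i\<in>UNIV. \<Sum>j\<in>UNIV. y i * A i $ j $ j * z$j + 2 * (y i * a i $ j * x$j))"
        by (simp add: gR_def distrib_left sum_distrib_left sum.distrib mult_ac)
      also have "\<dots> = (\<Sum>j\<in>UNIV. \<Sum>i\<in>UNIV. y i * A i $ j $ j * z$j + 2 * (y i * a i $ j * x$j))"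
        by (rule sum.swap)
      also have "\<dots> = (\<Sum>j\<in>UNIV. Q j * z$j + 2 * r j * x$j)"
        by (simp add: Q_def r_def sum.distrib sum_distrib_right sum_distrib_left mult_ac)
      finally show ?thesis .
    qed
    ultimately have s1: "(\<Sum>j\<in>UNIV. Q j * z$j + 2 * r j * x$j) \<le> B" by simp
    have "(\<Sum>j\<in>UNIV. Q j/2 * z$j - 2 * (r j)^2 / Q j) \<le> (\<Sum>j\<in>UNIV. Q j * z$j + 2 * r j * x$j)"
      by (rule sum_mono) (rule quad_lb[OF Qpos h])
    with s1 have "(\<Sum>j\<in>UNIV. Q j/2 * z$j) \<le> C"
      by (simp add: C_def sum_subtractf)
    moreover have zpos: "z$j \<ge> 0" for j using h[of j] by (smt (verit) zero_le_power2)
    moreover have "Q k/2 * z$k \<le> (\<Sum>j\<in>UNIV. Q j/2 * z$j)"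
      by (rule member_le_sum) (auto simp: zpos Qpos less_imp_le)
    ultimately have "Q k/2 * z$k \<le> \<bar>C\<bar>" by linarith
    then have zk: "z$k \<le> 2 * \<bar>C\<bar> / Q k" using Qpos[of k] by (simp add: field_simps)
    have "\<bar>x$k\<bar> \<le> 1 + z$k" using abs_le_sq[of "x$k"] h[of k] by linarith
    with zk zpos[of k] show ?thesis by (simp add: Rk_def)
  qed
  show ?thesis unfolding bounded_iff
  proof (intro exI ballI)
    fix p assume p: "p \<in> feasR A a b"
    obtain x z where pxz: "p = (x, z)" by (cases p)
    have "norm p \<le> norm x + norm z" unfolding pxz by (rule norm_Pair_le)
    also have "\<dots> \<le> (\<Sum>k\<in>UNIV. \<bar>x$k\<bar>) + (\<Sum>k\<in>UNIV. \<bar>z$k\<bar>)"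
      by (intro add_mono norm_le_l1_cart)
    also have "\<dots> \<le> (\<Sum>k\<in>UNIV. Rk k) + (\<Sum>k\<in>UNIV. Rk k)"
      using bnd[of x z] p pxz by (intro add_mono sum_mono) auto
    finally show "norm p \<le> 2 * (\<Sum>k\<in>UNIV. Rk k)" by simp
  qed
qed

lemma feasR_closed: "closed (feasR A a b)"
proof -
  have "feasR A a b = (\<Inter>i. {p. gR A a i (fst p) (snd p) \<le> b i}) \<inter> (\<Inter>j. {p. (fst p $ j)^2 \<le> snd p $ j})"
    by (auto simp: feasR_alt)
  moreover have "closed {p. gR A a i (fst p) (snd p) \<le> b i}" for i
    unfolding gR_def by (intro closed_Collect_le continuous_intros)
  moreover have "closed {p::((real^'n) \<times> (real^'n)). (fst p $ j)^2 \<le> snd p $ j}" for j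
    by (intro closed_Collect_le continuous_intros)
  ultimately show ?thesis by (auto intro!: closed_Int closed_INT)
qed

lemma lin_bound_ge: fixes c k B :: real assumes "\<And>s. s \<ge> 0 \<Longrightarrow> c - s * k \<le> B" shows "k \<ge> 0"
proof (rule ccontr)
  assume "\<not> k \<ge> 0"
  then have k: "k < 0" by simp
  define s where "s = (\<bar>B - c\<bar> + 1) / (-k)"
  have s0: "s \<ge> 0" unfolding s_def using k by (intro divide_nonneg_pos) auto
  have "s * k = -(\<bar>B - c\<bar> + 1)" using k by (simp add: s_def)
  with assms[OF s0] show False by linarith
qed

lemma lin_bound_le: fixes c k B :: real assumes "\<And>s. s \<ge> 0 \<Longrightarrow> c - s * k \<ge> B" shows "k \<le> 0"
proof (rule ccontr)
  assume "\<not> k \<le> 0"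
  then have k: "k > 0" by simp
  define s where "s = (\<bar>B - c\<bar> + 1) / k"
  have s0: "s \<ge> 0" using k by (simp add: s_def)
  have "s * k = \<bar>B - c\<bar> + 1" using k by (simp add: s_def)
  with assms[OF s0] show False by linarith
qed

lemma lin_zero: fixes K M p :: real assumes "\<And>s. s * K - M \<ge> p" shows "K = 0"
proof -
  have "\<And>s. s \<ge> 0 \<Longrightarrow> -M - s * K \<ge> p"
  proof -
    fix s :: real show "-M - s * K \<ge> p" using assms[of "-s"] by simp
  qed
  then have "K \<le> 0" by (rule lin_bound_le)
  moreover have "\<And>s. s \<ge> 0 \<Longrightarrow> -M - s * (-K) \<ge> p" using assms by simp
  then have "-K \<le> 0" by (rule lin_bound_le)
  ultimately show ?thesis by simp
qed

lemma sup_below: fixes g p B :: real assumes "\<And>t. t < p \<Longrightarrow> g * t \<le> B" "g \<ge> 0" shows "g * p \<le> B"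
proof (rule ccontr)
  assume "\<not> g * p \<le> B"
  then have gp: "g * p > B" by simp
  have "g * (p - 1) \<le> B" using assms(1) by simp
  then have g: "g > 0" using assms(2) gp by (cases "g = 0") auto
  define t where "t = p - (g * p - B) / (2 * g)"
  have "t < p" using gp g by (simp add: t_def)
  then have "g * t \<le> B" by (rule assms(1))
  moreover have "g * t = g * p - (g * p - B) / 2" using g by (simp add: t_def field_simps)
  ultimately have "g * p - (g * p - B) / 2 \<le> B" by simp
  then show False using gp by (simp add: field_simps)
qed

lemma nonpos_sum_zero: fixes f :: "'a \<Rightarrow> real"
  assumes "finite S" "\<And>i. i \<in> S \<Longrightarrow> f i \<le> 0" "sum f S \<ge> 0" "i \<in> S" shows "f i = 0"
proof -
  have "sum (\<lambda>i. - f i) S \<le> 0" using assms(3) by (simp add: sum_negf)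
  moreover have "sum (\<lambda>i. - f i) S \<ge> 0" using assms(2) by (simp add: sum_nonneg)
  ultimately have "sum (\<lambda>i. - f i) S = 0" by simp
  then have "\<forall>i\<in>S. - f i = 0" using sum_nonneg_eq_0_iff[OF assms(1), of "\<lambda>i. - f i"] assms(2) by auto
  then show ?thesis using assms(4) by simp
qed

lemma conv_strict: fixes u v t1 t2 p :: real
  assumes "u \<ge> 0" "v \<ge> 0" "u + v = 1" "t1 < p" "t2 < p" shows "u * t1 + v * t2 < p"
proof (cases "u = 0")
  case True then show ?thesis using assms by simp
next
  case False
  then have "u * t1 < u * p" using assms by simp
  moreover have "v * t2 \<le> v * p" using assms by (simp add: mult_left_mono)
  ultimately have "u * t1 + v * t2 < u * p + v * p" by simp
  also have "u * p + v * p = p" using assms(3) by (metis distrib_right mult_1)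
  finally show ?thesis .
qed

lemma sq_conv: fixes u v a b :: real assumes "u \<ge> 0" "v \<ge> 0" "u + v = 1"
  shows "(u * a + v * b)^2 \<le> u * a^2 + v * b^2"
proof -
  have "u * a^2 + v * b^2 - (u * a + v * b)^2 = u * v * (a - b)^2"
  proof -
    have v: "v = 1 - u" using assms(3) by simp
    show ?thesis unfolding v by (simp add: power2_eq_square algebra_simps)
  qed
  moreover have "u * v * (a - b)^2 \<ge> 0" using assms by simp
  ultimately show ?thesis by linarith
qed

lemma sum_axis: "(\<Sum>l\<in>UNIV. f l * (axis j (s::real)) $ l) = f j * s"
proof -
  have "(\<Sum>l\<in>UNIV. f l * (axis j s) $ l) = (\<Sum>l\<in>UNIV. if l = j then f j * s else 0)"
    by (rule sum.cong) (auto simp: axis_def)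
  then show ?thesis by simp
qed

lemma sum_axis_sq: "(\<Sum>l\<in>UNIV. f l * ((axis j (s::real)) $ l)^2) = f j * s^2"
proof -
  have "(\<Sum>l\<in>UNIV. f l * ((axis j s) $ l)^2) = (\<Sum>l\<in>UNIV. if l = j then f j * s^2 else 0)"
    by (rule sum.cong) (auto simp: axis_def)
  then show ?thesis by simp
qed

lemma gR_lin: "gR A a i (u *\<^sub>R x1 + v *\<^sub>R x2) (u *\<^sub>R z1 + v *\<^sub>R z2) = u * gR A a i x1 z1 + v * gR A a i x2 z2"
  by (simp add: gR_def sum.distrib sum_distrib_left algebra_simps)

lemma fR_lin: "fR D c (u *\<^sub>R x1 + v *\<^sub>R x2) (u *\<^sub>R z1 + v *\<^sub>R z2) = u * fR D c x1 z1 + v * fR D c x2 z2"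
  by (simp add: fR_def sum.distrib sum_distrib_left algebra_simps)

lemma gR_ez: "gR A a i 0 (axis j s) = A i $ j $ j * s"
  by (simp add: gR_def sum_axis)
lemma fR_ez: "fR D c 0 (axis j s) = D $ j $ j * s"
  by (simp add: fR_def sum_axis)
lemma gR_ex: "gR A a i (axis j s) 0 = 2 * (a i $ j * s)"
  by (simp add: gR_def sum_axis)
lemma fR_ex: "fR D c (axis j s) 0 = 2 * (c $ j * s)"
  by (simp add: fR_def sum_axis)

lemma gR_triv: "(\<forall>j. A i $ j $ j = 0 \<and> a i $ j = 0) \<Longrightarrow> gR A a i x z = 0"
  by (simp add: gR_def)

lemma multipliers:
  fixes A :: "'m::finite \<Rightarrow> real^'n^'n" and D :: "real^'n^'n"
  assumes Sk_empty: "\<And>k. S_set D c A a k = {}"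
    and x0R: "(x0, z0) \<in> feasR A a b" and x0s: "\<And>j. (x0$j)^2 < z0$j"
    and x0t: "\<And>i. gR A a i x0 z0 = b i \<Longrightarrow> (\<forall>j. A i $ j $ j = 0 \<and> a i $ j = 0)"
    and xsR: "(xs, zs) \<in> feasR A a b"
    and opt: "\<And>x z. (x, z) \<in> feasR A a b \<Longrightarrow> fR D c xs zs \<le> fR D c x z"
  shows "zs$j = (xs$j)^2"
proof -
  define p0 where "p0 = fR D c xs zs"
  define I where "I = {i. gR A a i x0 z0 < b i}"
  define SA :: "(((real^'m) \<times> (real^'n)) \<times> real) set" where
    "SA = {((u,w),t). \<exists>x z. (\<forall>i\<in>I. gR A a i x z - b i \<le> u$i) \<and> (\<forall>j. (x$j)^2 - z$j \<le> w$j) \<and> fR D c x z \<le> t}"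
  define SB :: "(((real^'m) \<times> (real^'n)) \<times> real) set" where
    "SB = {((u,w),t). (\<forall>i. u$i \<le> 0) \<and> (\<forall>j. w$j \<le> 0) \<and> t < p0}"
  define U where "U x z = (\<chi> i. gR A a i x z - b i)" for x z
  define W where "W x z = (\<chi> j. (x$j)^2 - z$j)" for x z :: "real^'n"
  have inSA: "((U x z, W x z), fR D c x z) \<in> SA" for x z by (auto simp: SA_def U_def W_def)
  have x0g: "gR A a i x0 z0 \<le> b i" for i using x0R by (auto simp: feasR_alt)
  have convA: "convex SA"
  proof (rule convexI)
    fix p q :: "((real^'m) \<times> (real^'n)) \<times> real" and u v :: real
    assume p: "p \<in> SA" and q: "q \<in> SA" and u: "0 \<le> u" and v: "0 \<le> v" and uv: "u + v = 1"
    obtain u1 w1 t1 where pe: "p = ((u1, w1), t1)" by (metis prod.collapse)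
    obtain u2 w2 t2 where qe: "q = ((u2, w2), t2)" by (metis prod.collapse)
    from p obtain x1 z1 where 1: "\<forall>i\<in>I. gR A a i x1 z1 - b i \<le> u1$i" "\<forall>j. (x1$j)^2 - z1$j \<le> w1$j" "fR D c x1 z1 \<le> t1"
      unfolding pe SA_def by auto
    from q obtain x2 z2 where 2: "\<forall>i\<in>I. gR A a i x2 z2 - b i \<le> u2$i" "\<forall>j. (x2$j)^2 - z2$j \<le> w2$j" "fR D c x2 z2 \<le> t2"
      unfolding qe SA_def by auto
    let ?x = "u *\<^sub>R x1 + v *\<^sub>R x2" and ?z = "u *\<^sub>R z1 + v *\<^sub>R z2"
    have g: "gR A a i ?x ?z - b i \<le> (u *\<^sub>R u1 + v *\<^sub>R u2)$i" if "i \<in> I" for i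
    proof -
      have "gR A a i ?x ?z - b i = u * (gR A a i x1 z1 - b i) + v * (gR A a i x2 z2 - b i)"
        using uv by (simp add: gR_lin algebra_simps) (metis distrib_right mult_1)
      also have "\<dots> \<le> u * u1$i + v * u2$i"
        using 1(1) 2(1) that u v by (intro add_mono mult_left_mono) auto
      finally show ?thesis by simp
    qed
    have h: "(?x$j)^2 - ?z$j \<le> (u *\<^sub>R w1 + v *\<^sub>R w2)$j" for j
    proof -
      have "(?x$j)^2 \<le> u * (x1$j)^2 + v * (x2$j)^2" using sq_conv[OF u v uv] by simp
      moreover have "u * ((x1$j)^2 - z1$j) \<le> u * w1$j" using 1(2) u by (intro mult_left_mono) auto
      moreover have "v * ((x2$j)^2 - z2$j) \<le> v * w2$j" using 2(2) v by (intro mult_left_mono) auto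
      ultimately show ?thesis by (simp add: algebra_simps)
    qed
    have f: "fR D c ?x ?z \<le> u * t1 + v * t2"
      using 1(3) 2(3) u v by (simp add: fR_lin add_mono mult_left_mono)
    have ex: "\<exists>x z. (\<forall>i\<in>I. gR A a i x z - b i \<le> (u *\<^sub>R u1 + v *\<^sub>R u2)$i) \<and>
       (\<forall>j. (x$j)^2 - z$j \<le> (u *\<^sub>R w1 + v *\<^sub>R w2)$j) \<and> fR D c x z \<le> u * t1 + v * t2"
      apply (rule exI[of _ ?x], rule exI[of _ ?z]) using g h f by blast
    have "u *\<^sub>R p + v *\<^sub>R q = ((u *\<^sub>R u1 + v *\<^sub>R u2, u *\<^sub>R w1 + v *\<^sub>R w2), u * t1 + v * t2)"
      unfolding pe qe by simp
    then show "u *\<^sub>R p + v *\<^sub>R q \<in> SA" unfolding SA_def using ex by simp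
  qed
  have convB: "convex SB"
  proof (rule convexI)
    fix p q :: "((real^'m) \<times> (real^'n)) \<times> real" and u v :: real
    assume p: "p \<in> SB" and q: "q \<in> SB" and u: "0 \<le> u" and v: "0 \<le> v" and uv: "u + v = 1"
    obtain u1 w1 t1 where pe: "p = ((u1, w1), t1)" by (metis prod.collapse)
    obtain u2 w2 t2 where qe: "q = ((u2, w2), t2)" by (metis prod.collapse)
    from p q have 1: "\<forall>i. u1$i \<le> 0" "\<forall>j. w1$j \<le> 0" "t1 < p0" and 2: "\<forall>i. u2$i \<le> 0" "\<forall>j. w2$j \<le> 0" "t2 < p0"
      unfolding pe qe SB_def by auto
    have "u * u1$i + v * u2$i \<le> 0" for i using 1 2 u v by (simp add: add_nonpos_nonpos mult_nonneg_nonpos)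
    moreover have "u * w1$j + v * w2$j \<le> 0" for j using 1 2 u v by (simp add: add_nonpos_nonpos mult_nonneg_nonpos)
    moreover have "u * t1 + v * t2 < p0" using conv_strict[OF u v uv 1(3) 2(3)] .
    ultimately show "u *\<^sub>R p + v *\<^sub>R q \<in> SB" unfolding pe qe SB_def by simp
  qed
  have neA: "SA \<noteq> {}" using inSA by blast
  have "((0,0), p0 - 1) \<in> SB" unfolding SB_def by simp
  then have neB: "SB \<noteq> {}" by blast
  have disj: "SB \<inter> SA = {}"
  proof (rule ccontr)
    assume "SB \<inter> SA \<noteq> {}"
    then obtain u w t where B: "((u,w),t) \<in> SB" and A: "((u,w),t) \<in> SA" by (metis disjoint_iff prod.collapse)
    from A obtain x z where 1: "\<forall>i\<in>I. gR A a i x z - b i \<le> u$i" "\<forall>j. (x$j)^2 - z$j \<le> w$j" "fR D c x z \<le> t"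
      unfolding SA_def by auto
    from B have 2: "\<forall>i. u$i \<le> 0" "\<forall>j. w$j \<le> 0" "t < p0" unfolding SB_def by auto
    have "gR A a i x z \<le> b i" for i
    proof (cases "i \<in> I")
      case True
      then have "gR A a i x z - b i \<le> u$i" using 1(1) by blast
      then show ?thesis using 2(1) by (smt (verit))
    next
      case False
      then have eq: "gR A a i x0 z0 = b i" using x0g[of i] by (simp add: I_def)
      from x0t[OF this] have "gR A a i x z = 0" "gR A a i x0 z0 = 0" by (auto intro: gR_triv)
      with eq show ?thesis by simp
    qed
    moreover have "(x$j)^2 \<le> z$j" for j using 1(2) 2(2) by (smt (verit))
    ultimately have "(x, z) \<in> feasR A a b" by (simp add: feasR_alt)
    from opt[OF this] 1(3) 2(3) show False by (simp add: p0_def)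
  qed
  obtain aa bb where aa0: "aa \<noteq> 0" and sepB: "\<forall>p\<in>SB. inner aa p \<le> bb" and sepA: "\<forall>p\<in>SA. inner aa p \<ge> bb"
    using separating_hyperplane_sets[OF convB convA neB neA disj] by blast
  obtain \<alpha> \<beta> \<gamma> where ae: "aa = ((\<alpha>, \<beta>), \<gamma>)" by (metis prod.collapse)
  have SB': "\<alpha> \<bullet> u + \<beta> \<bullet> w + \<gamma> * t \<le> bb" if "\<forall>i. u$i \<le> 0" "\<forall>j. w$j \<le> 0" "t < p0" for u w t
    using sepB that unfolding SB_def ae by auto
  have SA': "\<alpha> \<bullet> u + \<beta> \<bullet> w + \<gamma> * t \<ge> bb"
    if "\<forall>i\<in>I. gR A a i x z - b i \<le> u$i" "\<forall>j. (x$j)^2 - z$j \<le> w$j" "fR D c x z \<le> t" for u w t x z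
    using sepA that unfolding SA_def ae by fastforce
  have axis_le0: "\<forall>k. axis i (-s::real) $ k \<le> 0" if "s \<ge> 0" for i s using that by (simp add: axis_def)
  have al0: "\<alpha> $ i \<ge> 0" for i
  proof (rule lin_bound_ge[where c = "\<gamma> * (p0 - 1)" and B = bb])
    fix s :: real assume "s \<ge> 0"
    from SB'[OF axis_le0[OF this, of i], of 0 "p0 - 1"] show "\<gamma> * (p0 - 1) - s * \<alpha> $ i \<le> bb"
      by (simp add: inner_axis mult.commute)
  qed
  have be0: "\<beta> $ j \<ge> 0" for j
  proof (rule lin_bound_ge[where c = "\<gamma> * (p0 - 1)" and B = bb])
    fix s :: real assume "s \<ge> 0"
    from SB'[of 0, OF _ axis_le0[OF this, of j], of "p0 - 1"] show "\<gamma> * (p0 - 1) - s * \<beta> $ j \<le> bb"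
      by (simp add: inner_axis mult.commute)
  qed
  have ga0: "\<gamma> \<ge> 0"
  proof (rule lin_bound_ge[where c = "\<gamma> * (p0 - 1)" and B = bb])
    fix s :: real assume "s \<ge> 0"
    from SB'[of 0 0 "p0 - 1 - s"] this show "\<gamma> * (p0 - 1) - s * \<gamma> \<le> bb"
      by (simp add: algebra_simps)
  qed
  have gp: "\<gamma> * p0 \<le> bb"
    by (rule sup_below[OF _ ga0]) (use SB'[of 0 0] in simp)
  have alI: "\<alpha> $ i = 0" if "i \<notin> I" for i
  proof -
    have "\<alpha> $ i \<le> 0"
    proof (rule lin_bound_le[where c = "\<alpha> \<bullet> U xs zs + \<beta> \<bullet> W xs zs + \<gamma> * fR D c xs zs" and B = bb])
      fix s :: real assume "s \<ge> 0"
      have "\<forall>k\<in>I. gR A a k xs zs - b k \<le> (U xs zs + axis i (-s)) $ k"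
        using that by (auto simp: U_def axis_def)
      from SA'[OF this, of "W xs zs" "fR D c xs zs"]
      show "\<alpha> \<bullet> U xs zs + \<beta> \<bullet> W xs zs + \<gamma> * fR D c xs zs - s * \<alpha> $ i \<ge> bb"
        by (simp add: W_def inner_add_right inner_axis algebra_simps)
    qed
    with al0[of i] show ?thesis by simp
  qed
  have gpos: "\<gamma> > 0"
  proof (rule ccontr)
    assume "\<not> \<gamma> > 0"
    with ga0 have g0: "\<gamma> = 0" by simp
    with gp have bb0: "bb \<ge> 0" by simp
    have tot: "(\<Sum>i\<in>UNIV. \<alpha>$i * (U x0 z0)$i) + (\<Sum>j\<in>UNIV. \<beta>$j * (W x0 z0)$j) \<ge> 0"
      using SA'[of x0 z0 "U x0 z0" "W x0 z0" "fR D c x0 z0"] g0 bb0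
      by (simp add: U_def W_def inner_vec_def)
    have t1: "\<alpha>$i * (U x0 z0)$i \<le> 0" for i using al0[of i] x0g[of i]
      by (simp add: U_def mult_nonneg_nonpos)
    have t2: "\<beta>$j * (W x0 z0)$j \<le> 0" for j using be0[of j] x0s[of j]
      by (simp add: W_def mult_nonneg_nonpos)
    have s1: "(\<Sum>i\<in>UNIV. \<alpha>$i * (U x0 z0)$i) \<le> 0" by (rule sum_nonpos) (use t1 in auto)
    have s2: "(\<Sum>j\<in>UNIV. \<beta>$j * (W x0 z0)$j) \<le> 0" by (rule sum_nonpos) (use t2 in auto)
    have "\<alpha>$i = 0" for i
    proof (cases "i \<in> I")
      case True
      have "\<alpha>$i * (U x0 z0)$i = 0" by (rule nonpos_sum_zero[of UNIV]) (use t1 tot s2 in auto)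
      moreover have "(U x0 z0)$i < 0" using True by (simp add: U_def I_def)
      ultimately show ?thesis by simp
    next
      case False then show ?thesis by (rule alI)
    qed
    moreover have "\<beta>$j = 0" for j
    proof -
      have "\<beta>$j * (W x0 z0)$j = 0" by (rule nonpos_sum_zero[of UNIV]) (use t2 tot s1 in auto)
      moreover have "(W x0 z0)$j < 0" using x0s[of j] by (simp add: W_def)
      ultimately show ?thesis by simp
    qed
    ultimately have "\<alpha> = 0" "\<beta> = 0" by (auto simp: vec_eq_iff)
    then have "aa = 0" using g0 by (simp add: ae zero_prod_def)
    with aa0 show False by simp
  qed
  define \<mu> where "\<mu> i = \<alpha>$i / \<gamma>" for i
  define lam where "lam j = \<beta>$j / \<gamma>" for j
  have mu0: "\<mu> i \<ge> 0" for i using al0[of i] gpos by (simp add: \<mu>_def)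
  have la0: "lam j \<ge> 0" for j using be0[of j] gpos by (simp add: lam_def)
  define L where "L x z = fR D c x z + (\<Sum>i\<in>UNIV. \<mu> i * (gR A a i x z - b i)) + (\<Sum>j\<in>UNIV. lam j * ((x$j)^2 - z$j))" for x z
  have Lge: "L x z \<ge> p0" for x z
  proof -
    have "\<gamma> * L x z = \<alpha> \<bullet> U x z + \<beta> \<bullet> W x z + \<gamma> * fR D c x z"
      using gpos by (simp add: L_def U_def W_def inner_vec_def \<mu>_def lam_def distrib_left sum_distrib_left)
    also have "\<dots> \<ge> bb" by (rule SA') (auto simp: U_def W_def)
    finally have "\<gamma> * L x z \<ge> \<gamma> * p0" using gp by linarith
    then show ?thesis using gpos by simp
  qed
  define M where "M = (\<Sum>i\<in>UNIV. \<mu> i * b i)"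
  have K0: "D$j$j + (\<Sum>i\<in>UNIV. \<mu> i * A i $ j $ j) - lam j = 0" for j
  proof (rule lin_zero[where M = M and p = p0])
    fix s :: real
    have e1: "(\<Sum>i\<in>UNIV. \<mu> i * (A i $ j $ j * s - b i)) = s * (\<Sum>i\<in>UNIV. \<mu> i * A i $ j $ j) - M"
      by (simp add: M_def right_diff_distrib sum_subtractf sum_distrib_left mult_ac)
    have e2: "(\<Sum>l\<in>UNIV. lam l * (((0::real^'n)$l)^2 - axis j s $ l)) = - (lam j * s)"
      by (simp add: sum_negf sum_axis)
    have "L 0 (axis j s) = D$j$j * s + (s * (\<Sum>i\<in>UNIV. \<mu> i * A i $ j $ j) - M) + - (lam j * s)"
      unfolding L_def fR_ez gR_ez e1 e2 by simp
    also have "\<dots> = s * (D$j$j + (\<Sum>i\<in>UNIV. \<mu> i * A i $ j $ j) - lam j) - M"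
      by (simp add: algebra_simps)
    finally have "L 0 (axis j s) = s * (D$j$j + (\<Sum>i\<in>UNIV. \<mu> i * A i $ j $ j) - lam j) - M" .
    with Lge[of 0 "axis j s"] show "s * (D$j$j + (\<Sum>i\<in>UNIV. \<mu> i * A i $ j $ j) - lam j) - M \<ge> p0" by simp
  qed
  have lpos: "lam k > 0" for k
  proof (rule ccontr)
    assume "\<not> lam k > 0"
    with la0[of k] have l0: "lam k = 0" by simp
    have C0: "2 * (c$k + (\<Sum>i\<in>UNIV. \<mu> i * a i $ k)) = 0"
    proof (rule lin_zero[where M = M and p = p0])
      fix s :: real
      have e1: "(\<Sum>i\<in>UNIV. \<mu> i * (2 * (a i $ k * s) - b i)) = 2 * s * (\<Sum>i\<in>UNIV. \<mu> i * a i $ k) - M"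
        by (simp add: M_def right_diff_distrib sum_subtractf sum_distrib_left mult_ac)
      have e2: "(\<Sum>l\<in>UNIV. lam l * ((axis k s $ l)^2 - (0::real^'n) $ l)) = lam k * s^2"
        by (simp add: sum_axis_sq)
      have "L (axis k s) 0 = 2 * (c $ k * s) + (2 * s * (\<Sum>i\<in>UNIV. \<mu> i * a i $ k) - M) + lam k * s^2"
        unfolding L_def fR_ex gR_ex e1 e2 by simp
      also have "\<dots> = s * (2 * (c$k + (\<Sum>i\<in>UNIV. \<mu> i * a i $ k))) + lam k * s^2 - M"
        by (simp add: algebra_simps)
      finally have "L (axis k s) 0 = s * (2 * (c$k + (\<Sum>i\<in>UNIV. \<mu> i * a i $ k))) + lam k * s^2 - M" .
      with Lge[of "axis k s" 0] l0 show "s * (2 * (c$k + (\<Sum>i\<in>UNIV. \<mu> i * a i $ k))) - M \<ge> p0" by simp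
    qed
    have c1: "D$k$k + (\<Sum>i\<in>UNIV. \<mu> i * A i $ k $ k) = 0" using K0[of k] l0 by linarith
    have c2: "c$k + (\<Sum>i\<in>UNIV. \<mu> i * a i $ k) = 0" using C0 by simp
    have c3: "\<forall>j. j \<noteq> k \<longrightarrow> D$j$j + (\<Sum>i\<in>UNIV. \<mu> i * A i $ j $ j) \<ge> 0"
    proof (intro allI impI)
      fix j show "D$j$j + (\<Sum>i\<in>UNIV. \<mu> i * A i $ j $ j) \<ge> 0" using K0[of j] la0[of j] by linarith
    qed
    have "\<mu> \<in> S_set D c A a k"
      unfolding S_set_def using c1 c2 c3 mu0 by blast
    with Sk_empty show False by simp
  qed
  have xsg: "gR A a i xs zs \<le> b i" for i using xsR by (auto simp: feasR_alt)
  have xsh: "(xs$j)^2 \<le> zs$j" for j using xsR by (auto simp: feasR_alt)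
  have s1: "(\<Sum>i\<in>UNIV. \<mu> i * (gR A a i xs zs - b i)) \<le> 0"
    by (rule sum_nonpos) (use mu0 xsg in \<open>auto simp: mult_nonneg_nonpos\<close>)
  have t2: "lam j * ((xs$j)^2 - zs$j) \<le> 0" for j using la0[of j] xsh[of j] by (simp add: mult_nonneg_nonpos)
  have "(\<Sum>j\<in>UNIV. lam j * ((xs$j)^2 - zs$j)) \<ge> 0" using Lge[of xs zs] s1 by (simp add: L_def p0_def)
  then have "lam j * ((xs$j)^2 - zs$j) = 0" by (intro nonpos_sum_zero[of UNIV]) (use t2 in auto)
  with lpos[of j] show ?thesis by simp
qed

theorem theorem2:
  fixes D :: "real^'n^'n" and c :: "real^'n"
    and A :: "'m::finite \<Rightarrow> real^'n^'n" and a :: "'m \<Rightarrow> real^'n" and b :: "'m \<Rightarrow> real"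
  assumes diagD: "diag_mat D"
    and diagA: "\<And>i. diag_mat (A i)"
    and A1_i: "feasP A a b \<noteq> {}"
    and A1_ii: "\<exists>y::'m \<Rightarrow> real. (\<forall>i. y i \<ge> 0) \<and> pd (\<Sum>i\<in>UNIV. y i *\<^sub>R A i)"
    and A1_iii: "feasS_has_interior A a b"
    and Sk_empty: "\<And>k. S_set D c A a k = {}"
  shows "p_star D c A a b = v_star D c A a b \<and> v_star D c A a b = c_star D c A a b"
proof -
  obtain x0 z0 where sl: "(x0, z0) \<in> feasR A a b" "\<And>j. (x0$j)^2 < z0$j"
    "\<And>i. gR A a i x0 z0 = b i \<Longrightarrow> (\<forall>j. A i $ j $ j = 0 \<and> a i $ j = 0)"
    using slater[OF diagA A1_iii] by blast
  have comp: "compact (feasR A a b)"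
    using feasR_bounded[OF diagA A1_ii] feasR_closed by (simp add: compact_eq_bounded_closed)
  have ne: "feasR A a b \<noteq> {}"
  proof -
    from A1_i obtain x where "x \<in> feasP A a b" by blast
    from S_to_R[OF diagA diagD feasP_to_S[OF diagA this]] show ?thesis by blast
  qed
  have cont: "continuous_on (feasR A a b) (\<lambda>p. fR D c (fst p) (snd p))"
    unfolding fR_def by (intro continuous_intros)
  obtain q where q: "q \<in> feasR A a b" and qmin: "\<And>p. p \<in> feasR A a b \<Longrightarrow> fR D c (fst q) (snd q) \<le> fR D c (fst p) (snd p)"
    using continuous_attains_inf[OF comp ne cont] by blast
  obtain xs zs where qe: "q = (xs, zs)" by (cases q)
  define p0 where "p0 = fR D c xs zs"
  have xsR: "(xs, zs) \<in> feasR A a b" using q qe by simp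
  have opt: "\<And>x z. (x, z) \<in> feasR A a b \<Longrightarrow> fR D c xs zs \<le> fR D c x z"
    using qmin qe by fastforce
  have zs: "zs$j = (xs$j)^2" for j
    by (rule multipliers[OF Sk_empty sl xsR opt])
  have zsv: "zs = (\<chi> j. (xs$j)^2)" using zs by (simp add: vec_eq_iff)
  have xsP: "xs \<in> feasP A a b"
  proof -
    have "gR A a i xs zs \<le> b i" for i using xsR by (auto simp: feasR_alt)
    moreover have "xs \<bullet> (A i *v xs) + 2 * (a i \<bullet> xs) = gR A a i xs zs" for i
      unfolding diag_quad[OF diagA] by (simp add: gR_def zsv inner_sum_cart)
    ultimately show ?thesis by (simp add: feasP_def)
  qed
  have fxs: "xs \<bullet> (D *v xs) + 2 * (c \<bullet> xs) = p0"
    unfolding diag_quad[OF diagD] by (simp add: p0_def fR_def zsv inner_sum_cart)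
  have pst: "p_star D c A a b = ereal p0"
    unfolding p_star_alt
  proof (rule antisym)
    show "(INF p\<in>feasR A a b. ereal (fR D c (fst p) (snd p))) \<le> ereal p0"
      using xsR by (intro INF_lower2[OF xsR]) (simp add: p0_def)
    show "ereal p0 \<le> (INF p\<in>feasR A a b. ereal (fR D c (fst p) (snd p)))"
      using opt by (intro INF_greatest) (auto simp: p0_def)
  qed
  have pv: "ereal p0 \<le> v_star D c A a b"
    unfolding v_star_def
  proof (rule INF_greatest)
    fix p assume p: "p \<in> feasS A a b"
    obtain x X where pe: "p = (x, X)" by (cases p)
    from S_to_R[OF diagA diagD p[unfolded pe], of c]
    have "(x, \<chi> j. X$j$j) \<in> feasR A a b" "fR D c x (\<chi> j. X$j$j) = mat_bullet D X + 2 * (c \<bullet> x)" by auto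
    with opt[OF this(1)] show "ereal p0 \<le> ereal (mat_bullet D (snd p) + 2 * (c \<bullet> fst p))"
      by (simp add: pe p0_def)
  qed
  have vc: "v_star D c A a b \<le> c_star D c A a b"
    unfolding c_star_def
  proof (rule INF_greatest)
    fix x assume x: "x \<in> feasP A a b"
    have "mat_bullet D (outer x) = x \<bullet> (D *v x)"
      using diagD by (simp add: diag_bullet diag_quad outer_comp power2_eq_square)
    then show "v_star D c A a b \<le> ereal (x \<bullet> (D *v x) + 2 * (c \<bullet> x))"
      unfolding v_star_def using feasP_to_S[OF diagA x] by (intro INF_lower2) auto
  qed
  have cp: "c_star D c A a b \<le> ereal p0"
    unfolding c_star_def using xsP fxs by (intro INF_lower2) auto
  show ?thesis using pst pv vc cp by (metis antisym order_trans)
qed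

end
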